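(* There is an absolute constant $c>0$ with the following property. Let $q\ge 2$ be a prime power and let $R$ be a finite local ring containing the field $\mathbb{F}_q$ as a subring, with $d=\dim_{\mathbb{F}_q}R$ and $\delta=\dim_{\mathbb{F}_q}(R\setminus R^* )$, where $R^*$ is the set of units of $R$. If $d=2+\delta$, then the chain geometry $\Sigma(\mathbb{F}_q,R)$ contains a blocking set of size at most $c\,q^{d-1}\log q$ (i.e., of size $O(q^{d-1}\log q)$).
   Context: All rings are associative with unit element $1\neq 0$, and subrings share the unit. $R^2$ is regarded as a left $R$-module. The projective line $\mathbb{P}(R)$ is the set of all submodules of $R^2$ of the form $R(a,b)$ where $(a\ b)$ is the first row of some invertible $2\times 2$ matrix over $R$. For a field $K\subseteq R$ (as a subring), $\mathbb{P}(K)$ is embedded in $\mathbb{P}(R)$ via $K(a,b)\mapsto R(a,b)$. The chain geometry $\Sigma(K,R)$ has point set $\mathbb{P}(R)$ and its blocks, called chains, are the sets $\mathbb{P}(K)^g$ with $g\in\mathrm{GL}_2(R)$. A blocking set is a set $B$ of points such that every chain contains at least one element of $B$. *)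

theory Defs
  imports "HOL-Computational_Algebra.Primes" "HOL-Algebra.Embedded_Algebras" "HOL-Algebra.Ideal" Complex_Main
begin

definition local_ring :: "('a, 'b) ring_scheme \<Rightarrow> bool" where
  "local_ring R \<longleftrightarrow> ring R \<and> ideal (carrier R - Units R) R"

text \<open>2x2 matrices over R as quadruples (a,b,c,d) = [[a,b],[c,d]].\<close>
type_synonym 'a mat2 = "'a \<times> 'a \<times> 'a \<times> 'a"

definition mat2_mult :: "('a, 'b) ring_scheme \<Rightarrow> 'a mat2 \<Rightarrow> 'a mat2 \<Rightarrow> 'a mat2" where
  "mat2_mult R M N = (case M of (a,b,c,d) \<Rightarrow> case N of (e,f,g,h) \<Rightarrow>
     (a \<otimes>\<^bsub>R\<^esub> e \<oplus>\<^bsub>R\<^esub> b \<otimes>\<^bsub>R\<^esub> g, a \<otimes>\<^bsub>R\<^esub> f \<oplus>\<^bsub>R\<^esub> b \<otimes>\<^bsub>R\<^esub> h,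
      c \<otimes>\<^bsub>R\<^esub> e \<oplus>\<^bsub>R\<^esub> d \<otimes>\<^bsub>R\<^esub> g, c \<otimes>\<^bsub>R\<^esub> f \<oplus>\<^bsub>R\<^esub> d \<otimes>\<^bsub>R\<^esub> h))"

definition mat2_one :: "('a, 'b) ring_scheme \<Rightarrow> 'a mat2" where
  "mat2_one R = (\<one>\<^bsub>R\<^esub>, \<zero>\<^bsub>R\<^esub>, \<zero>\<^bsub>R\<^esub>, \<one>\<^bsub>R\<^esub>)"

definition GL2 :: "('a, 'b) ring_scheme \<Rightarrow> 'a set \<Rightarrow> 'a mat2 set" where
  "GL2 R S = {M. M \<in> S \<times> S \<times> S \<times> S \<and>
     (\<exists>N \<in> S \<times> S \<times> S \<times> S. mat2_mult R M N = mat2_one R \<and> mat2_mult R N M = mat2_one R)}"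

definition cyc :: "('a, 'b) ring_scheme \<Rightarrow> 'a set \<Rightarrow> 'a \<Rightarrow> 'a \<Rightarrow> ('a \<times> 'a) set" where
  "cyc R S a b = {(r \<otimes>\<^bsub>R\<^esub> a, r \<otimes>\<^bsub>R\<^esub> b) | r. r \<in> S}"

definition proj_line :: "('a, 'b) ring_scheme \<Rightarrow> ('a \<times> 'a) set set" where
  "proj_line R = {cyc R (carrier R) a b | a b c d. (a, b, c, d) \<in> GL2 R (carrier R)}"

text \<open>The image of P(K) in P(R) under K(a,b) \<mapsto> R(a,b).\<close>
definition proj_line_sub :: "('a, 'b) ring_scheme \<Rightarrow> 'a set \<Rightarrow> ('a \<times> 'a) set set" where
  "proj_line_sub R K = {cyc R (carrier R) a b | a b c d. (a, b, c, d) \<in> GL2 R K}"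

text \<open>Right action of a 2x2 matrix on row vectors, and on points (submodules).\<close>
definition vec_act :: "('a, 'b) ring_scheme \<Rightarrow> 'a mat2 \<Rightarrow> 'a \<times> 'a \<Rightarrow> 'a \<times> 'a" where
  "vec_act R g v = (case v of (x, y) \<Rightarrow> case g of (a, b, c, d) \<Rightarrow>
     (x \<otimes>\<^bsub>R\<^esub> a \<oplus>\<^bsub>R\<^esub> y \<otimes>\<^bsub>R\<^esub> c, x \<otimes>\<^bsub>R\<^esub> b \<oplus>\<^bsub>R\<^esub> y \<otimes>\<^bsub>R\<^esub> d))"

definition point_act :: "('a, 'b) ring_scheme \<Rightarrow> 'a mat2 \<Rightarrow> ('a \<times> 'a) set \<Rightarrow> ('a \<times> 'a) set" where
  "point_act R g p = vec_act R g ` p"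

definition chains :: "('a, 'b) ring_scheme \<Rightarrow> 'a set \<Rightarrow> ('a \<times> 'a) set set set" where
  "chains R K = {point_act R g ` proj_line_sub R K | g. g \<in> GL2 R (carrier R)}"

definition blocking_set :: "('a, 'b) ring_scheme \<Rightarrow> 'a set \<Rightarrow> ('a \<times> 'a) set set \<Rightarrow> bool" where
  "blocking_set R K B \<longleftrightarrow> B \<subseteq> proj_line R \<and> (\<forall>C \<in> chains R K. C \<inter> B \<noteq> {})"

end

theory Submission
  imports Defs
begin


lemma exists_heavy:
  fixes Y :: "'a set" and F :: "'a set set"
  assumes "finite Y" "F \<subseteq> Pow Y" "\<forall>C\<in>F. k \<le> card C" "F \<noteq> {}" "k > 0"
  shows "\<exists>y\<in>Y. k * card F \<le> card Y * card {C\<in>F. y \<in> C}"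
proof (rule ccontr)
  assume H: "\<not> ?thesis"
  have finF: "finite F" using assms(1,2) by (meson finite_Pow_iff finite_subset)
  have "Y \<noteq> {}"
  proof
    assume "Y = {}" then have "F \<subseteq> {{}}" using assms(2) by auto
    moreover obtain C where "C \<in> F" using assms(4) by auto
    ultimately have "C = {}" by auto
    then show False using assms(3,5) \<open>C \<in> F\<close> by auto
  qed
  have eq: "(\<Sum>C\<in>F. card C) = (\<Sum>y\<in>Y. card {C\<in>F. y \<in> C})"
  proof -
    have "(\<Sum>C\<in>F. card C) = (\<Sum>C\<in>F. \<Sum>y\<in>Y. if y \<in> C then 1 else (0::nat))"
    proof (rule sum.cong[OF refl])
      fix C assume "C \<in> F" then have "C \<subseteq> Y" using assms(2) by auto
      then have "(\<Sum>y\<in>Y. if y \<in> C then 1 else (0::nat)) = card (Y \<inter> C)"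
        using assms(1) by (simp add: sum.If_cases)
      then show "card C = (\<Sum>y\<in>Y. if y \<in> C then 1 else (0::nat))" using \<open>C \<subseteq> Y\<close>
        by (simp add: Int_absorb1)
    qed
    also have "\<dots> = (\<Sum>y\<in>Y. \<Sum>C\<in>F. if y \<in> C then 1 else (0::nat))" by (rule sum.swap)
    also have "\<dots> = (\<Sum>y\<in>Y. card {C\<in>F. y \<in> C})"
      using finF by (simp add: sum.If_cases Int_def conj_commute)
    finally show ?thesis .
  qed
  have "k * card F \<le> (\<Sum>C\<in>F. card C)"
    using assms(3) sum_mono[of F "\<lambda>_. k" card] by (simp add: mult.commute)
  then have "card Y * (k * card F) \<le> card Y * (\<Sum>y\<in>Y. card {C\<in>F. y \<in> C})" using eq by simp
  also have "\<dots> = (\<Sum>y\<in>Y. card Y * card {C\<in>F. y \<in> C})" by (simp add: sum_distrib_left)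
  also have "\<dots> < (\<Sum>y\<in>Y. k * card F)"
    using H assms(1) \<open>Y \<noteq> {}\<close> by (intro sum_strict_mono) (auto simp: not_le)
  also have "\<dots> = card Y * (k * card F)" by simp
  finally show False by simp
qed

lemma transversal:
  fixes Y :: "'a set" and F :: "'a set set" and k :: nat
  assumes "finite Y" "F \<subseteq> Pow Y" "k > 0" "\<forall>C\<in>F. k \<le> card C" "F \<noteq> {}"
  shows "\<exists>T \<subseteq> Y. (\<forall>C\<in>F. C \<inter> T \<noteq> {}) \<and>
           real (card T) \<le> real (card Y) / real k * ln (real (card F)) + 1"
  using assms(2,4,5)
proof (induction "card F" arbitrary: F rule: less_induct)
  case less
  have finF: "finite F" using assms(1) less.prems(1) by (meson finite_Pow_iff finite_subset)
  obtain y where y: "y \<in> Y" "k * card F \<le> card Y * card {C\<in>F. y \<in> C}"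
    using exists_heavy[OF assms(1) less.prems(1,2,3) assms(3)] by blast
  define F' where "F' = {C\<in>F. y \<notin> C}"
  have cardF: "card F = card F' + card {C\<in>F. y \<in> C}"
    unfolding F'_def using finF by (subst card_Un_disjoint[symmetric]) (auto intro: arg_cong[where f=card])
  have Fpos: "card F > 0" using finF less.prems(3) by (simp add: card_gt_0_iff)
  have Ypos: "card Y > 0"
    using y(1) assms(1) by (auto simp: card_gt_0_iff)
  have cpos: "card {C\<in>F. y \<in> C} > 0"
  proof -
    have "k * card F > 0" using Fpos assms(3) by simp
    then show ?thesis using y(2) by (metis gr0I mult_0_right not_le)
  qed
  have lnF: "ln (real (card F)) \<ge> 0" using Fpos by simp
  show ?case
  proof (cases "F' = {}")
    case True
    then have "\<forall>C\<in>F. C \<inter> {y} \<noteq> {}" unfolding F'_def by auto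
    moreover have "real (card {y}) \<le> real (card Y) / real k * ln (real (card F)) + 1"
      using lnF by simp
    ultimately show ?thesis using y(1) by blast
  next
    case False
    have lt: "card F' < card F" using cardF cpos by simp
    have "F' \<subseteq> Pow Y" "\<forall>C\<in>F'. k \<le> card C" using less.prems unfolding F'_def by auto
    then obtain T' where T': "T' \<subseteq> Y" "\<forall>C\<in>F'. C \<inter> T' \<noteq> {}"
      "real (card T') \<le> real (card Y) / real k * ln (real (card F')) + 1"
      using less.hyps[OF lt] False by blast
    have F'pos: "card F' > 0" using False finF unfolding F'_def by (simp add: card_gt_0_iff)
    let ?v = "real (card Y)" and ?k = "real k" and ?a = "real (card F)" and ?b = "real (card F')"
    have key: "ln ?b - ln ?a \<le> - ?k / ?v"
    proof -
      have "ln ?b - ln ?a = ln (?b / ?a)" using F'pos Fpos by (simp add: ln_div)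
      also have "\<dots> \<le> ?b / ?a - 1" using F'pos Fpos by (intro ln_le_minus_one) simp
      also have "\<dots> = - real (card {C\<in>F. y \<in> C}) / ?a" proof -
        have "?a = ?b + real (card {C\<in>F. y \<in> C})" using cardF by simp
        moreover have "?a > 0" using Fpos by simp
        ultimately show ?thesis by (simp add: field_simps)
      qed
      also have "\<dots> \<le> - ?k / ?v"
      proof -
        have "?k * ?a \<le> ?v * real (card {C\<in>F. y \<in> C})" using y(2) by (metis of_nat_le_iff of_nat_mult)
        then show ?thesis using Fpos Ypos by (simp add: field_simps)
      qed
      finally show ?thesis .
    qed
    have "?v / ?k * ln ?b + 1 + 1 \<le> ?v / ?k * ln ?a + 1"
    proof -
      have "?v / ?k * (ln ?b - ln ?a) \<le> ?v / ?k * (- ?k / ?v)"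
        using key Ypos assms(3) by (intro mult_left_mono) auto
      also have "\<dots> = -1" using Ypos assms(3) by simp
      finally show ?thesis by (simp add: algebra_simps)
    qed
    moreover have "real (card (insert y T')) \<le> real (card T') + 1"
    proof -
      have "finite T'" using T'(1) assms(1) finite_subset by blast
      then show ?thesis by (simp add: card_insert_if)
    qed
    moreover have "\<forall>C\<in>F. C \<inter> insert y T' \<noteq> {}" using T'(2) unfolding F'_def by auto
    ultimately show ?thesis using T'(1,3) y(1)
      by (intro exI[of _ "insert y T'"]) auto
  qed
qed



lemma (in ring) minus_eq_zero_iff:
  assumes "a \<in> carrier R" "b \<in> carrier R"
  shows "(a \<ominus> b = \<zero>) = (a = b)"
proof
  assume "a \<ominus> b = \<zero>"
  moreover have "a = (a \<ominus> b) \<oplus> b" using assms by algebra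
  ultimately show "a = b" using assms by simp
next
  assume "a = b" then show "a \<ominus> b = \<zero>" using assms by (simp add: minus_eq r_neg)
qed

lemma (in ring) add_left_cancel':
  assumes "a \<in> carrier R" "b \<in> carrier R" "c \<in> carrier R" "a \<oplus> b = a \<oplus> c"
  shows "b = c"
proof -
  have "b = \<ominus> a \<oplus> (a \<oplus> b)" using assms(1-3) by algebra
  also have "\<dots> = \<ominus> a \<oplus> (a \<oplus> c)" by (simp only: assms(4))
  also have "\<dots> = c" using assms(1-3) by algebra
  finally show ?thesis .
qed



lemma (in ring) dimension_card:
  assumes "dimension n K E" "subfield K R"
  shows "card E = card K ^ n"
  using assms
proof (induction rule: dimension.induct)
  case (zero_dim K) then show ?case by simp
next
  case (Suc_dim v E n K)
  note K = Suc_dim(5)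
  have KR: "K \<subseteq> carrier R" using subringE(1)[OF subfieldE(1)[OF K]] .
  have ES: "E \<subseteq> carrier R" using space_subgroup_props(1)[OF K Suc_dim(3)] .
  have img: "line_extension K v E = (\<lambda>(k,e). k \<otimes> v \<oplus> e) ` (K \<times> E)"
    apply (auto simp: line_extension_mem_iff)
    apply (rule bexI) apply (rule bexI) apply (rule refl) apply auto
    done
  have inj: "inj_on (\<lambda>(k,e). k \<otimes> v \<oplus> e) (K \<times> E)"
  proof (rule inj_onI, clarify)
    fix k e k' e' assume A: "k \<in> K" "e \<in> E" "k' \<in> K" "e' \<in> E" "k \<otimes> v \<oplus> e = k' \<otimes> v \<oplus> e'"
    have c: "k \<in> carrier R" "k' \<in> carrier R" "e \<in> carrier R" "e' \<in> carrier R" using A KR ES by auto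
    show "k = k' \<and> e = e'"
    proof (cases "k = k'")
      case True
      then have "k \<otimes> v \<oplus> e = k \<otimes> v \<oplus> e'" using A(5) by simp
      then have "e = e'" using add_left_cancel'[of "k \<otimes> v" e e'] c Suc_dim(1) by simp
      then show ?thesis using True by simp
    next
      case False
      have eq: "(k \<ominus> k') \<otimes> v = e' \<ominus> e" using A(5) c Suc_dim(1)
      proof -
        have "(k \<ominus> k') \<otimes> v = (k \<otimes> v \<oplus> e) \<ominus> (k' \<otimes> v \<oplus> e)" using c Suc_dim(1) by algebra
        also have "\<dots> = (k' \<otimes> v \<oplus> e') \<ominus> (k' \<otimes> v \<oplus> e)" using A(5) by simp
        also have "\<dots> = e' \<ominus> e" using c Suc_dim(1) by algebra
        finally show ?thesis .
      qed
      have "e' \<ominus> e \<in> E" using space_subgroup_props(3,4)[OF K Suc_dim(3)] A(2,4)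
        by (simp add: minus_eq)
      moreover have "k \<ominus> k' \<in> K - {\<zero>}"
      proof -
        have "k \<ominus> k' \<in> K" using A(1,3) subringE(5,7)[OF subfieldE(1)[OF K]] by (simp add: minus_eq)
        moreover have "k \<ominus> k' \<noteq> \<zero>" using False minus_eq_zero_iff[OF c(1,2)] by simp
        ultimately show ?thesis by simp
      qed
      ultimately have "v \<in> E" using space_subgroup_props(6)[OF K Suc_dim(3)] eq Suc_dim(1) by auto
      then show ?thesis using Suc_dim(2) by simp
    qed
  qed
  have "card (line_extension K v E) = card (K \<times> E)" using img card_image[OF inj] by simp
  then show ?case using Suc_dim(4)[OF K] by (simp add: card_cartesian_product)
qed



definition nonunits :: "('a, 'b) ring_scheme \<Rightarrow> 'a set" where
  "nonunits R = carrier R - Units R"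

definition rho :: "('a, 'b) ring_scheme \<Rightarrow> 'a \<Rightarrow> 'a set" where
  "rho R x = {y \<in> carrier R. y \<ominus>\<^bsub>R\<^esub> x \<in> nonunits R}"

locale chain_setting = ring R for R (structure) +
  fixes K :: "'a set"
  assumes Mideal: "ideal (nonunits R) R"
  and K: "subfield K R"
  and fin: "finite (carrier R)"
begin

abbreviation "M \<equiv> nonunits R"

lemma M_sub: "M \<subseteq> carrier R" unfolding nonunits_def by auto

lemma M_add: "a \<in> M \<Longrightarrow> b \<in> M \<Longrightarrow> a \<oplus> b \<in> M"
  using additive_subgroup.a_closed[OF ideal.axioms(1)[OF Mideal]] by blast
lemma M_neg: "a \<in> M \<Longrightarrow> \<ominus> a \<in> M"
  using additive_subgroup.a_inv_closed[OF ideal.axioms(1)[OF Mideal]] by blast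
lemma M_zero: "\<zero> \<in> M"
  using additive_subgroup.zero_closed[OF ideal.axioms(1)[OF Mideal]] by blast
lemma M_minus: "a \<in> M \<Longrightarrow> b \<in> M \<Longrightarrow> a \<ominus> b \<in> M"
  using M_add M_neg by (simp add: minus_eq)
lemma M_lmult: "a \<in> M \<Longrightarrow> x \<in> carrier R \<Longrightarrow> x \<otimes> a \<in> M"
  using ideal.I_l_closed[OF Mideal] by blast
lemma M_rmult: "a \<in> M \<Longrightarrow> x \<in> carrier R \<Longrightarrow> a \<otimes> x \<in> M"
  using ideal.I_r_closed[OF Mideal] by blast

lemma unit_notin_M: "u \<in> Units R \<Longrightarrow> u \<notin> M" unfolding nonunits_def by auto
lemma notM_unit: "x \<in> carrier R \<Longrightarrow> x \<notin> M \<Longrightarrow> x \<in> Units R" unfolding nonunits_def by auto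
lemma one_notin_M: "\<one> \<notin> M" using unit_notin_M by simp

lemma unit_add_M:
  assumes "u \<in> Units R" "m \<in> M" shows "u \<oplus> m \<in> Units R"
proof (rule ccontr)
  have c: "u \<in> carrier R" "m \<in> carrier R" using assms M_sub by auto
  assume "u \<oplus> m \<notin> Units R"
  then have "u \<oplus> m \<in> M" using c unfolding nonunits_def by auto
  then have "(u \<oplus> m) \<ominus> m \<in> M" using M_minus assms(2) by blast
  moreover have "(u \<oplus> m) \<ominus> m = u" using c by algebra
  ultimately show False using unit_notin_M assms(1) by simp
qed

lemma KR: "K \<subseteq> carrier R" using subfieldE(3)[OF K] .

lemma K_unit: "k \<in> K \<Longrightarrow> k \<noteq> \<zero> \<Longrightarrow> k \<in> Units R"
  using subfield_m_inv[OF K, of k] KR unfolding Units_def by auto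

lemma K_M: "k \<in> K \<Longrightarrow> k \<in> M \<Longrightarrow> k = \<zero>"
  using K_unit unit_notin_M by blast

lemma K_minus: "a \<in> K \<Longrightarrow> b \<in> K \<Longrightarrow> a \<ominus> b \<in> K"
  using subringE(5,7)[OF subfieldE(1)[OF K]] by (simp add: minus_eq)

lemma rho_mem: "x \<in> carrier R \<Longrightarrow> x \<in> rho R x"
  unfolding rho_def using M_zero by (simp add: minus_eq r_neg)

lemma rho_sub: "rho R x \<subseteq> carrier R" unfolding rho_def by auto

lemma rho_eq:
  assumes "x \<in> carrier R" "y \<in> carrier R" "x \<ominus> y \<in> M"
  shows "rho R x = rho R y"
proof -
  have "z \<ominus> x \<in> M \<longleftrightarrow> z \<ominus> y \<in> M" if z: "z \<in> carrier R" for z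
  proof
    assume "z \<ominus> x \<in> M"
    then have "(z \<ominus> x) \<oplus> (x \<ominus> y) \<in> M" using M_add assms(3) by blast
    moreover have "(z \<ominus> x) \<oplus> (x \<ominus> y) = z \<ominus> y" using z assms(1,2) by algebra
    ultimately show "z \<ominus> y \<in> M" by simp
  next
    assume "z \<ominus> y \<in> M"
    then have "(z \<ominus> y) \<ominus> (x \<ominus> y) \<in> M" using M_minus assms(3) by blast
    moreover have "(z \<ominus> y) \<ominus> (x \<ominus> y) = z \<ominus> x" using z assms(1,2) by algebra
    ultimately show "z \<ominus> x \<in> M" by simp
  qed
  then show ?thesis unfolding rho_def by auto
qed

lemma rho_eqD:
  assumes "x \<in> carrier R" "y \<in> carrier R" "rho R x = rho R y"
  shows "x \<ominus> y \<in> M"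
  using rho_mem[OF assms(1)] assms(3) unfolding rho_def by auto

lemma rho_disj:
  assumes "x \<in> carrier R" "y \<in> carrier R" "rho R x \<noteq> rho R y"
  shows "rho R x \<inter> rho R y = {}"
proof (rule ccontr)
  assume "rho R x \<inter> rho R y \<noteq> {}"
  then obtain z where z: "z \<in> carrier R" "z \<ominus> x \<in> M" "z \<ominus> y \<in> M" unfolding rho_def by auto
  have "(z \<ominus> y) \<ominus> (z \<ominus> x) \<in> M" using z M_minus by blast
  moreover have "(z \<ominus> y) \<ominus> (z \<ominus> x) = x \<ominus> y" using z(1) assms(1,2) by algebra
  ultimately have "rho R x = rho R y" using rho_eq assms(1,2) by simp
  then show False using assms(3) by simp
qed

lemma card_rho:
  assumes "x \<in> carrier R" shows "card (rho R x) = card M"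
proof -
  have "rho R x = (\<lambda>m. m \<oplus> x) ` M"
  proof (rule Set.set_eqI)
    fix z show "z \<in> rho R x \<longleftrightarrow> z \<in> (\<lambda>m. m \<oplus> x) ` M"
    proof
      assume "z \<in> rho R x"
      then have z: "z \<in> carrier R" "z \<ominus> x \<in> M" unfolding rho_def by auto
      have "z = (z \<ominus> x) \<oplus> x" using z(1) assms by algebra
      then show "z \<in> (\<lambda>m. m \<oplus> x) ` M" using z(2) by blast
    next
      assume "z \<in> (\<lambda>m. m \<oplus> x) ` M"
      then obtain m where m: "m \<in> M" "z = m \<oplus> x" by blast
      have mc: "m \<in> carrier R" using m(1) M_sub by auto
      have "(m \<oplus> x) \<ominus> x = m" using mc assms by algebra
      then show "z \<in> rho R x" using m mc assms unfolding rho_def by auto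
    qed
  qed
  moreover have "inj_on (\<lambda>m. m \<oplus> x) M"
  proof (rule inj_onI)
    fix a b assume ab: "a \<in> M" "b \<in> M" "a \<oplus> x = b \<oplus> x"
    have c: "a \<in> carrier R" "b \<in> carrier R" using ab M_sub by auto
    have "x \<oplus> a = x \<oplus> b" using ab(3) c assms by (simp add: a_comm)
    then show "a = b" using add_left_cancel'[OF assms c] by simp
  qed
  ultimately show ?thesis by (simp add: card_image)
qed

lemma card_partition_rho:
  "card (carrier R) = card (rho R ` carrier R) * card M"
proof -
  have U: "\<Union> (rho R ` carrier R) = carrier R" using rho_mem rho_sub by blast
  have "card M * card (rho R ` carrier R) = card (\<Union> (rho R ` carrier R))"
  proof (rule card_partition)
    show "finite (rho R ` carrier R)" using fin by simp
    show "finite (\<Union> (rho R ` carrier R))" using U fin by simp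
    show "\<And>c. c \<in> rho R ` carrier R \<Longrightarrow> card c = card M" using card_rho by auto
    show "\<And>c1 c2. c1 \<in> rho R ` carrier R \<Longrightarrow> c2 \<in> rho R ` carrier R \<Longrightarrow> c1 \<noteq> c2 \<Longrightarrow> c1 \<inter> c2 = {}"
      using rho_disj by auto
  qed
  then show ?thesis using U by (simp add: mult.commute)
qed

end



definition w1 :: "('a, 'b) ring_scheme \<Rightarrow> 'a mat2 \<Rightarrow> 'a \<Rightarrow> 'a" where
  "w1 R g b = (case g of (g1,g2,g3,g4) \<Rightarrow> g1 \<oplus>\<^bsub>R\<^esub> b \<otimes>\<^bsub>R\<^esub> g3)"
definition w2 :: "('a, 'b) ring_scheme \<Rightarrow> 'a mat2 \<Rightarrow> 'a \<Rightarrow> 'a" where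
  "w2 R g b = (case g of (g1,g2,g3,g4) \<Rightarrow> g2 \<oplus>\<^bsub>R\<^esub> b \<otimes>\<^bsub>R\<^esub> g4)"
definition sval :: "('a, 'b) ring_scheme \<Rightarrow> 'a mat2 \<Rightarrow> 'a \<Rightarrow> 'a" where
  "sval R g b = inv\<^bsub>R\<^esub> (w1 R g b) \<otimes>\<^bsub>R\<^esub> w2 R g b"
definition good :: "('a, 'b) ring_scheme \<Rightarrow> 'a set \<Rightarrow> 'a mat2 \<Rightarrow> bool" where
  "good R K g = (g \<in> GL2 R (carrier R) \<and> (\<forall>b\<in>K. w1 R g b \<in> Units R))"
definition Gset :: "('a, 'b) ring_scheme \<Rightarrow> 'a set \<Rightarrow> 'a mat2 \<Rightarrow> 'a set set" where
  "Gset R K g = (\<lambda>b. rho R (sval R g b)) ` K"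
definition resid :: "('a, 'b) ring_scheme \<Rightarrow> 'a mat2 \<Rightarrow> 'a set \<times> 'a set \<times> 'a set \<times> 'a set" where
  "resid R g = (case g of (g1,g2,g3,g4) \<Rightarrow> (rho R g1, rho R g2, rho R g3, rho R g4))"

context chain_setting begin

lemma lin_id:
  assumes "a \<in> carrier R" "c \<in> carrier R" "a' \<in> carrier R" "c' \<in> carrier R"
    "x \<in> carrier R" "y \<in> carrier R" "l \<in> carrier R"
  shows "(a \<otimes> x \<oplus> c \<otimes> y) \<ominus> l \<otimes> (a' \<otimes> x \<oplus> c' \<otimes> y) = (a \<ominus> l \<otimes> a') \<otimes> x \<oplus> (c \<ominus> l \<otimes> c') \<otimes> y"
  using assms by algebra

lemma GL2_inv:
  assumes "(g1,g2,g3,g4) \<in> GL2 R (carrier R)"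
  obtains h1 h2 h3 h4 where "h1 \<in> carrier R" "h2 \<in> carrier R" "h3 \<in> carrier R" "h4 \<in> carrier R"
    "g1 \<otimes> h1 \<oplus> g2 \<otimes> h3 = \<one>" "g1 \<otimes> h2 \<oplus> g2 \<otimes> h4 = \<zero>"
    "g3 \<otimes> h1 \<oplus> g4 \<otimes> h3 = \<zero>" "g3 \<otimes> h2 \<oplus> g4 \<otimes> h4 = \<one>"
  using assms unfolding GL2_def mat2_mult_def mat2_one_def by auto

lemma GL2_carrier:
  assumes "(g1,g2,g3,g4) \<in> GL2 R (carrier R)"
  shows "g1 \<in> carrier R" "g2 \<in> carrier R" "g3 \<in> carrier R" "g4 \<in> carrier R"
  using assms unfolding GL2_def by auto

lemma row_eqs:
  assumes g: "(g1,g2,g3,g4) \<in> GL2 R (carrier R)" and b: "b \<in> carrier R"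
  and h: "h1 \<in> carrier R" "h2 \<in> carrier R" "h3 \<in> carrier R" "h4 \<in> carrier R"
    "g1 \<otimes> h1 \<oplus> g2 \<otimes> h3 = \<one>" "g1 \<otimes> h2 \<oplus> g2 \<otimes> h4 = \<zero>"
    "g3 \<otimes> h1 \<oplus> g4 \<otimes> h3 = \<zero>" "g3 \<otimes> h2 \<oplus> g4 \<otimes> h4 = \<one>"
  shows "(g1 \<oplus> b \<otimes> g3) \<otimes> h1 \<oplus> (g2 \<oplus> b \<otimes> g4) \<otimes> h3 = \<one>"
    and "(g1 \<oplus> b \<otimes> g3) \<otimes> h2 \<oplus> (g2 \<oplus> b \<otimes> g4) \<otimes> h4 = b"
proof -
  note gc = GL2_carrier[OF g]
  have "(g1 \<oplus> b \<otimes> g3) \<otimes> h1 \<oplus> (g2 \<oplus> b \<otimes> g4) \<otimes> h3 = (g1 \<otimes> h1 \<oplus> g2 \<otimes> h3) \<oplus> b \<otimes> (g3 \<otimes> h1 \<oplus> g4 \<otimes> h3)"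
    using gc b h(1-4) by algebra
  then show "(g1 \<oplus> b \<otimes> g3) \<otimes> h1 \<oplus> (g2 \<oplus> b \<otimes> g4) \<otimes> h3 = \<one>" using h(5,7) b by simp
  have "(g1 \<oplus> b \<otimes> g3) \<otimes> h2 \<oplus> (g2 \<oplus> b \<otimes> g4) \<otimes> h4 = (g1 \<otimes> h2 \<oplus> g2 \<otimes> h4) \<oplus> b \<otimes> (g3 \<otimes> h2 \<oplus> g4 \<otimes> h4)"
    using gc b h(1-4) by algebra
  then show "(g1 \<oplus> b \<otimes> g3) \<otimes> h2 \<oplus> (g2 \<oplus> b \<otimes> g4) \<otimes> h4 = b" using h(6,8) b by simp
qed

lemma w2_unit:
  assumes g: "(g1,g2,g3,g4) \<in> GL2 R (carrier R)" and b: "b \<in> carrier R"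
    and n: "g1 \<oplus> b \<otimes> g3 \<notin> Units R"
  shows "g2 \<oplus> b \<otimes> g4 \<in> Units R"
proof (rule ccontr)
  note gc = GL2_carrier[OF g]
  obtain h1 h2 h3 h4 where h: "h1 \<in> carrier R" "h2 \<in> carrier R" "h3 \<in> carrier R" "h4 \<in> carrier R"
    "g1 \<otimes> h1 \<oplus> g2 \<otimes> h3 = \<one>" "g1 \<otimes> h2 \<oplus> g2 \<otimes> h4 = \<zero>"
    "g3 \<otimes> h1 \<oplus> g4 \<otimes> h3 = \<zero>" "g3 \<otimes> h2 \<oplus> g4 \<otimes> h4 = \<one>"
    using GL2_inv[OF g] by blast
  assume n2: "g2 \<oplus> b \<otimes> g4 \<notin> Units R"
  have "g1 \<oplus> b \<otimes> g3 \<in> M" "g2 \<oplus> b \<otimes> g4 \<in> M" using n n2 gc b unfolding nonunits_def by auto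
  then have "(g1 \<oplus> b \<otimes> g3) \<otimes> h1 \<oplus> (g2 \<oplus> b \<otimes> g4) \<otimes> h3 \<in> M"
    using M_add M_rmult h(1,3) by blast
  then show False using row_eqs(1)[OF g b h] one_notin_M by simp
qed

end



context chain_setting begin

lemma Kc: "b \<in> K \<Longrightarrow> b \<in> carrier R" using KR by auto

lemma inj_key:
  assumes g: "(g1,g2,g3,g4) \<in> GL2 R (carrier R)" and b: "b \<in> K" and b': "b' \<in> K"
    and u: "g1 \<oplus> b \<otimes> g3 \<in> Units R" and u': "g1 \<oplus> b' \<otimes> g3 \<in> Units R"
    and eq: "inv (g1 \<oplus> b \<otimes> g3) \<otimes> (g2 \<oplus> b \<otimes> g4) \<ominus> inv (g1 \<oplus> b' \<otimes> g3) \<otimes> (g2 \<oplus> b' \<otimes> g4) \<in> M"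
  shows "b = b'"
proof -
  note gc = GL2_carrier[OF g]
  have bc: "b \<in> carrier R" "b' \<in> carrier R" using b b' Kc by auto
  obtain h1 h2 h3 h4 where h: "h1 \<in> carrier R" "h2 \<in> carrier R" "h3 \<in> carrier R" "h4 \<in> carrier R"
    "g1 \<otimes> h1 \<oplus> g2 \<otimes> h3 = \<one>" "g1 \<otimes> h2 \<oplus> g2 \<otimes> h4 = \<zero>"
    "g3 \<otimes> h1 \<oplus> g4 \<otimes> h3 = \<zero>" "g3 \<otimes> h2 \<oplus> g4 \<otimes> h4 = \<one>"
    using GL2_inv[OF g] by blast
  define a where "a = g1 \<oplus> b \<otimes> g3"
  define a' where "a' = g1 \<oplus> b' \<otimes> g3"
  define c where "c = g2 \<oplus> b \<otimes> g4"
  define c' where "c' = g2 \<oplus> b' \<otimes> g4"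
  have cc: "a \<in> carrier R" "a' \<in> carrier R" "c \<in> carrier R" "c' \<in> carrier R"
    unfolding a_def a'_def c_def c'_def using gc bc by auto
  have ua: "a \<in> Units R" "a' \<in> Units R" using u u' unfolding a_def a'_def by auto
  have ic: "inv a \<in> carrier R" "inv a' \<in> carrier R" using ua by auto
  define l where "l = a \<otimes> inv a'"
  have lc: "l \<in> carrier R" unfolding l_def using cc ic by auto
  define dl where "dl = c \<ominus> l \<otimes> c'"
  have "a \<otimes> (inv a \<otimes> c \<ominus> inv a' \<otimes> c') = (a \<otimes> inv a) \<otimes> c \<ominus> (a \<otimes> inv a') \<otimes> c'"
    using cc ic by algebra
  also have "\<dots> = dl" unfolding dl_def l_def using ua cc by simp
  finally have dl_eq: "dl = a \<otimes> (inv a \<otimes> c \<ominus> inv a' \<otimes> c')" ..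
  have dlM: "dl \<in> M" unfolding dl_eq using M_lmult eq cc unfolding a_def c_def a'_def c'_def by blast
  have dlc: "dl \<in> carrier R" using dlM M_sub by auto
  have "a \<ominus> l \<otimes> a' = a \<ominus> a \<otimes> (inv a' \<otimes> a')" unfolding l_def using cc ic by algebra
  also have "\<dots> = \<zero>" using ua cc by (simp add: minus_eq r_neg)
  finally have z: "a \<ominus> l \<otimes> a' = \<zero>" .
  have r1: "a \<otimes> h1 \<oplus> c \<otimes> h3 = \<one>" "a' \<otimes> h1 \<oplus> c' \<otimes> h3 = \<one>"
    using row_eqs(1)[OF g bc(1) h] row_eqs(1)[OF g bc(2) h] unfolding a_def a'_def c_def c'_def by auto
  have r2: "a \<otimes> h2 \<oplus> c \<otimes> h4 = b" "a' \<otimes> h2 \<oplus> c' \<otimes> h4 = b'"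
    using row_eqs(2)[OF g bc(1) h] row_eqs(2)[OF g bc(2) h] unfolding a_def a'_def c_def c'_def by auto
  have "\<one> \<ominus> l \<otimes> \<one> = (a \<ominus> l \<otimes> a') \<otimes> h1 \<oplus> dl \<otimes> h3"
    using lin_id[OF cc(1,3,2,4) h(1,3) lc] r1 unfolding dl_def by simp
  also have "\<dots> = dl \<otimes> h3" using z h dlc by simp
  finally have m1: "\<one> \<ominus> l \<in> M" using M_rmult[OF dlM h(3)] lc by simp
  have "b \<ominus> l \<otimes> b' = (a \<ominus> l \<otimes> a') \<otimes> h2 \<oplus> dl \<otimes> h4"
    using lin_id[OF cc(1,3,2,4) h(2,4) lc] r2 unfolding dl_def by simp
  also have "\<dots> = dl \<otimes> h4" using z h dlc by simp
  finally have m2: "b \<ominus> l \<otimes> b' \<in> M" using M_rmult[OF dlM h(4)] by simp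
  have "b \<ominus> b' = (b \<ominus> l \<otimes> b') \<oplus> (\<ominus> ((\<one> \<ominus> l) \<otimes> b'))" using bc lc by algebra
  moreover have "\<ominus> ((\<one> \<ominus> l) \<otimes> b') \<in> M" using M_neg M_rmult[OF m1 bc(2)] by blast
  ultimately have "b \<ominus> b' \<in> M" using m2 M_add by simp
  moreover have "b \<ominus> b' \<in> K" using K_minus b b' by simp
  ultimately have "b \<ominus> b' = \<zero>" using K_M by blast
  then show ?thesis using minus_eq_zero_iff bc by simp
qed

lemma good_sval_carrier:
  assumes "good R K g" "b \<in> K"
  shows "sval R g b \<in> carrier R"
proof -
  obtain g1 g2 g3 g4 where gg: "g = (g1,g2,g3,g4)" by (cases g) auto
  have "w1 R g b \<in> Units R" using assms unfolding good_def by auto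
  moreover have "g \<in> GL2 R (carrier R)" using assms unfolding good_def by auto
  ultimately show ?thesis using GL2_carrier[of g1 g2 g3 g4] Kc[OF assms(2)]
    unfolding sval_def w2_def gg by auto
qed

lemma inj_Gset:
  assumes "good R K g"
  shows "inj_on (\<lambda>b. rho R (sval R g b)) K"
proof (rule inj_onI)
  obtain g1 g2 g3 g4 where gg: "g = (g1,g2,g3,g4)" by (cases g) auto
  fix b b' assume bb: "b \<in> K" "b' \<in> K" "rho R (sval R g b) = rho R (sval R g b')"
  have "sval R g b \<ominus> sval R g b' \<in> M"
    using rho_eqD[OF good_sval_carrier[OF assms bb(1)] good_sval_carrier[OF assms bb(2)] bb(3)] .
  moreover have "g \<in> GL2 R (carrier R)" "\<forall>b\<in>K. w1 R g b \<in> Units R" using assms unfolding good_def by auto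
  ultimately show "b = b'"
    using inj_key[of g1 g2 g3 g4 b b'] bb unfolding gg sval_def w1_def w2_def by auto
qed

lemma card_Gset:
  assumes "good R K g" shows "card (Gset R K g) = card K"
  unfolding Gset_def using inj_Gset[OF assms] by (simp add: card_image)

lemma Gset_sub: "good R K g \<Longrightarrow> Gset R K g \<subseteq> rho R ` carrier R"
proof
  fix X assume g: "good R K g" and "X \<in> Gset R K g"
  then obtain b where b: "b \<in> K" "X = rho R (sval R g b)" unfolding Gset_def by auto
  then show "X \<in> rho R ` carrier R" using good_sval_carrier[OF g b(1)] by blast
qed

end



lemma card_factor_le:
  assumes "finite (f ` A)" "\<And>x y. x \<in> A \<Longrightarrow> y \<in> A \<Longrightarrow> f x = f y \<Longrightarrow> h x = h y"
  shows "card (h ` A) \<le> card (f ` A)"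
proof -
  define sel where "sel z = (SOME x. x \<in> A \<and> f x = z)" for z
  have sel: "sel (f x) \<in> A \<and> f (sel (f x)) = f x" if "x \<in> A" for x
    unfolding sel_def by (rule someI[of _ x]) (simp add: that)
  have "h ` A = (\<lambda>z. h (sel z)) ` (f ` A)"
  proof (rule Set.set_eqI)
    fix u show "u \<in> h ` A \<longleftrightarrow> u \<in> (\<lambda>z. h (sel z)) ` (f ` A)"
    proof
      assume "u \<in> h ` A"
      then obtain x where x: "x \<in> A" "u = h x" by auto
      have "h (sel (f x)) = h x" using assms(2)[of "sel (f x)" x] sel[OF x(1)] x(1) by simp
      then show "u \<in> (\<lambda>z. h (sel z)) ` (f ` A)" using x by (metis image_eqI)
    next
      assume "u \<in> (\<lambda>z. h (sel z)) ` (f ` A)"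
      then obtain x where x: "x \<in> A" "u = h (sel (f x))" by auto
      then show "u \<in> h ` A" using sel[OF x(1)] by simp
    qed
  qed
  then show ?thesis using card_image_le[OF assms(1), of "\<lambda>z. h (sel z)"] by simp
qed

context chain_setting begin

lemma diff_lin:
  assumes "g1 \<in> carrier R" "g3 \<in> carrier R" "e1 \<in> carrier R" "e3 \<in> carrier R" "b \<in> carrier R"
    "g1 \<ominus> e1 \<in> M" "g3 \<ominus> e3 \<in> M"
  shows "(g1 \<oplus> b \<otimes> g3) \<ominus> (e1 \<oplus> b \<otimes> e3) \<in> M"
proof -
  have "(g1 \<oplus> b \<otimes> g3) \<ominus> (e1 \<oplus> b \<otimes> e3) = (g1 \<ominus> e1) \<oplus> b \<otimes> (g3 \<ominus> e3)"
    using assms(1-5) by algebra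
  then show ?thesis using M_add M_lmult assms by simp
qed

lemma sval_diff:
  assumes ua: "a \<in> Units R" "a' \<in> Units R" and cc: "c \<in> carrier R" "c' \<in> carrier R"
    and d1: "a \<ominus> a' \<in> M" and d2: "c \<ominus> c' \<in> M"
  shows "inv a \<otimes> c \<ominus> inv a' \<otimes> c' \<in> M"
proof -
  have ac: "a \<in> carrier R" "a' \<in> carrier R" using ua by auto
  have ic: "inv a \<in> carrier R" "inv a' \<in> carrier R" using ua by auto
  have e1: "inv a \<otimes> c \<ominus> inv a' \<otimes> c' = inv a \<otimes> (c \<ominus> c') \<oplus> (inv a \<ominus> inv a') \<otimes> c'"
    using ic cc by algebra
  have "inv a \<otimes> (a' \<ominus> a) \<otimes> inv a' = inv a \<otimes> (a' \<otimes> inv a') \<ominus> (inv a \<otimes> a) \<otimes> inv a'"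
    using ic ac by algebra
  also have "\<dots> = inv a \<ominus> inv a'" using Units_r_inv[OF ua(2)] Units_l_inv[OF ua(1)] ic
    by (simp only: r_one l_one)
  finally have e2: "inv a \<ominus> inv a' = inv a \<otimes> (a' \<ominus> a) \<otimes> inv a'" ..
  have "a' \<ominus> a = \<ominus> (a \<ominus> a')" using ac by algebra
  then have "a' \<ominus> a \<in> M" using M_neg d1 by simp
  then have "inv a \<otimes> (a' \<ominus> a) \<in> M" using M_lmult ic by blast
  then have "inv a \<ominus> inv a' \<in> M" unfolding e2 using M_rmult ic by blast
  then have m1: "(inv a \<ominus> inv a') \<otimes> c' \<in> M" using M_rmult cc by blast
  have m2: "inv a \<otimes> (c \<ominus> c') \<in> M" using M_lmult d2 ic by blast
  show ?thesis unfolding e1 using M_add[OF m2 m1] .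
qed

lemma Gset_resid:
  assumes g: "good R K g" and g': "good R K g'" and r: "resid R g = resid R g'"
  shows "Gset R K g = Gset R K g'"
proof -
  obtain g1 g2 g3 g4 where gg: "g = (g1,g2,g3,g4)" by (cases g) auto
  obtain e1 e2 e3 e4 where ee: "g' = (e1,e2,e3,e4)" by (cases g') auto
  have G: "(g1,g2,g3,g4) \<in> GL2 R (carrier R)" "(e1,e2,e3,e4) \<in> GL2 R (carrier R)"
    using g g' unfolding good_def gg ee by auto
  note gc = GL2_carrier[OF G(1)] and ec = GL2_carrier[OF G(2)]
  have rr: "rho R g1 = rho R e1" "rho R g2 = rho R e2" "rho R g3 = rho R e3" "rho R g4 = rho R e4"
    using r unfolding resid_def gg ee by auto
  have dM: "g1 \<ominus> e1 \<in> M" "g2 \<ominus> e2 \<in> M" "g3 \<ominus> e3 \<in> M" "g4 \<ominus> e4 \<in> M"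
    using rho_eqD gc ec rr by auto
  have "rho R (sval R g b) = rho R (sval R g' b)" if b: "b \<in> K" for b
  proof (rule rho_eq)
    show "sval R g b \<in> carrier R" "sval R g' b \<in> carrier R" using good_sval_carrier g g' b by auto
    have u: "g1 \<oplus> b \<otimes> g3 \<in> Units R" "e1 \<oplus> b \<otimes> e3 \<in> Units R"
      using g g' b unfolding good_def gg ee w1_def by auto
    have bc: "b \<in> carrier R" using Kc b .
    show "sval R g b \<ominus> sval R g' b \<in> M"
      unfolding sval_def w1_def w2_def gg ee using sval_diff[OF u] diff_lin[OF gc(1,3) ec(1,3) bc dM(1,3)]
        diff_lin[OF gc(2,4) ec(2,4) bc dM(2,4)] gc ec bc by auto
  qed
  then show ?thesis unfolding Gset_def by auto
qed

lemma card_Gsets: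
  "card (Gset R K ` {g. good R K g}) \<le> card (rho R ` carrier R) ^ 4"
proof -
  let ?Y = "rho R ` carrier R"
  have sub: "resid R ` {g. good R K g} \<subseteq> ?Y \<times> ?Y \<times> ?Y \<times> ?Y"
  proof
    fix x assume "x \<in> resid R ` {g. good R K g}"
    then obtain g where g: "good R K g" "x = resid R g" by auto
    obtain g1 g2 g3 g4 where gg: "g = (g1,g2,g3,g4)" by (cases g) auto
    have "(g1,g2,g3,g4) \<in> GL2 R (carrier R)" using g unfolding good_def gg by auto
    note c = GL2_carrier[OF this]
    have "x = (rho R g1, rho R g2, rho R g3, rho R g4)" using g(2) unfolding resid_def gg by simp
    then show "x \<in> ?Y \<times> ?Y \<times> ?Y \<times> ?Y" using c by blast
  qed
  have finY: "finite ?Y" using fin by simp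
  have "card (Gset R K ` {g. good R K g}) \<le> card (resid R ` {g. good R K g})"
  proof (rule card_factor_le)
    show "finite (resid R ` {g. good R K g})" using sub finY by (meson finite_SigmaI finite_subset)
    show "\<And>x y. x \<in> {g. good R K g} \<Longrightarrow> y \<in> {g. good R K g} \<Longrightarrow> resid R x = resid R y \<Longrightarrow> Gset R K x = Gset R K y"
      using Gset_resid by blast
  qed
  also have "\<dots> \<le> card (?Y \<times> ?Y \<times> ?Y \<times> ?Y)" using sub finY by (intro card_mono) (simp_all add: finite_SigmaI)
  also have "\<dots> = card ?Y ^ 4" by (simp add: card_cartesian_product power4_eq_xxxx)
  finally show ?thesis .
qed

end



context chain_setting begin

lemma cyc_unit:
  assumes u: "u \<in> Units R" and x: "x \<in> carrier R" and y: "y \<in> carrier R"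
  shows "cyc R (carrier R) (u \<otimes> x) (u \<otimes> y) = cyc R (carrier R) x y"
proof (rule Set.set_eqI)
  have uc: "u \<in> carrier R" "inv u \<in> carrier R" using u by auto
  fix p show "p \<in> cyc R (carrier R) (u \<otimes> x) (u \<otimes> y) \<longleftrightarrow> p \<in> cyc R (carrier R) x y"
  proof
    assume "p \<in> cyc R (carrier R) (u \<otimes> x) (u \<otimes> y)"
    then obtain r where r: "r \<in> carrier R" "p = (r \<otimes> (u \<otimes> x), r \<otimes> (u \<otimes> y))" unfolding cyc_def by auto
    have "p = ((r \<otimes> u) \<otimes> x, (r \<otimes> u) \<otimes> y)" using r uc x y by (simp add: m_assoc)
    moreover have "r \<otimes> u \<in> carrier R" using r uc by auto
    ultimately show "p \<in> cyc R (carrier R) x y" unfolding cyc_def by blast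
  next
    assume "p \<in> cyc R (carrier R) x y"
    then obtain r where r: "r \<in> carrier R" "p = (r \<otimes> x, r \<otimes> y)" unfolding cyc_def by auto
    have e: "(r \<otimes> inv u) \<otimes> (u \<otimes> z) = r \<otimes> z" if "z \<in> carrier R" for z
    proof -
      have "(r \<otimes> inv u) \<otimes> (u \<otimes> z) = r \<otimes> (inv u \<otimes> u) \<otimes> z" using r uc that by (simp add: m_assoc)
      then show ?thesis using u r that by simp
    qed
    have "p = ((r \<otimes> inv u) \<otimes> (u \<otimes> x), (r \<otimes> inv u) \<otimes> (u \<otimes> y))" using e x y r by simp
    moreover have "r \<otimes> inv u \<in> carrier R" using r uc by auto
    ultimately show "p \<in> cyc R (carrier R) (u \<otimes> x) (u \<otimes> y)" unfolding cyc_def by blast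
  qed
qed

lemma GL2_upper:
  assumes "\<one> \<in> S" "\<zero> \<in> S" "s \<in> S" "\<ominus> s \<in> S" "s \<in> carrier R"
  shows "(\<one>, s, \<zero>, \<one>) \<in> GL2 R S"
  unfolding GL2_def mat2_mult_def mat2_one_def
  using assms by (intro CollectI conjI bexI[of _ "(\<one>, \<ominus> s, \<zero>, \<one>)"]) (auto simp: r_neg l_neg)

lemma GL2_swap:
  assumes "t \<in> carrier R"
  shows "(t, \<one>, \<one>, \<zero>) \<in> GL2 R (carrier R)"
  unfolding GL2_def mat2_mult_def mat2_one_def
  using assms by (intro CollectI conjI bexI[of _ "(\<zero>, \<one>, \<one>, \<ominus> t)"]) (auto simp: r_neg l_neg)

lemma pt_sub: "b \<in> K \<Longrightarrow> cyc R (carrier R) \<one> b \<in> proj_line_sub R K"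
  unfolding proj_line_sub_def
  using GL2_upper[of K b] subringE(2,3,5)[OF subfieldE(1)[OF K]] Kc by blast

lemma pt_1s: "s \<in> carrier R \<Longrightarrow> cyc R (carrier R) \<one> s \<in> proj_line R"
  unfolding proj_line_def using GL2_upper[of "carrier R" s] by blast

lemma pt_t1: "t \<in> carrier R \<Longrightarrow> cyc R (carrier R) t \<one> \<in> proj_line R"
  unfolding proj_line_def using GL2_swap[of t] by blast

lemma point_act_cyc:
  assumes "g1 \<in> carrier R" "g2 \<in> carrier R" "g3 \<in> carrier R" "g4 \<in> carrier R" "b \<in> carrier R"
  shows "point_act R (g1,g2,g3,g4) (cyc R (carrier R) \<one> b) = cyc R (carrier R) (g1 \<oplus> b \<otimes> g3) (g2 \<oplus> b \<otimes> g4)"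
proof -
  have "vec_act R (g1,g2,g3,g4) (r \<otimes> \<one>, r \<otimes> b) = (r \<otimes> (g1 \<oplus> b \<otimes> g3), r \<otimes> (g2 \<oplus> b \<otimes> g4))"
    if r: "r \<in> carrier R" for r
  proof -
    have "(r \<otimes> \<one>) \<otimes> g1 \<oplus> (r \<otimes> b) \<otimes> g3 = r \<otimes> (g1 \<oplus> b \<otimes> g3)" using assms r by algebra
    moreover have "(r \<otimes> \<one>) \<otimes> g2 \<oplus> (r \<otimes> b) \<otimes> g4 = r \<otimes> (g2 \<oplus> b \<otimes> g4)" using assms r by algebra
    ultimately show ?thesis unfolding vec_act_def by simp
  qed
  note V = this
  show ?thesis
  proof (rule Set.set_eqI)
    fix p show "p \<in> point_act R (g1,g2,g3,g4) (cyc R (carrier R) \<one> b) \<longleftrightarrow> p \<in> cyc R (carrier R) (g1 \<oplus> b \<otimes> g3) (g2 \<oplus> b \<otimes> g4)"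
    proof
      assume "p \<in> point_act R (g1,g2,g3,g4) (cyc R (carrier R) \<one> b)"
      then obtain r where r: "r \<in> carrier R" "p = vec_act R (g1,g2,g3,g4) (r \<otimes> \<one>, r \<otimes> b)"
        unfolding point_act_def cyc_def by auto
      then show "p \<in> cyc R (carrier R) (g1 \<oplus> b \<otimes> g3) (g2 \<oplus> b \<otimes> g4)"
        using V[OF r(1)] unfolding cyc_def by auto
    next
      assume "p \<in> cyc R (carrier R) (g1 \<oplus> b \<otimes> g3) (g2 \<oplus> b \<otimes> g4)"
      then obtain r where r: "r \<in> carrier R" "p = (r \<otimes> (g1 \<oplus> b \<otimes> g3), r \<otimes> (g2 \<oplus> b \<otimes> g4))"
        unfolding cyc_def by auto
      have "(r \<otimes> \<one>, r \<otimes> b) \<in> cyc R (carrier R) \<one> b" using r(1) unfolding cyc_def by blast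
      then show "p \<in> point_act R (g1,g2,g3,g4) (cyc R (carrier R) \<one> b)"
        using V[OF r(1)] r(2) unfolding point_act_def by (metis image_eqI)
    qed
  qed
qed

end



context chain_setting begin

lemma blocking:
  assumes T: "T \<subseteq> rho R ` carrier R" and hit: "\<And>g. good R K g \<Longrightarrow> Gset R K g \<inter> T \<noteq> {}"
  shows "blocking_set R K ((\<lambda>s. cyc R (carrier R) \<one> s) ` (\<Union>T) \<union> (\<lambda>t. cyc R (carrier R) t \<one>) ` M)"
  unfolding blocking_set_def
proof (intro conjI ballI)
  let ?B = "(\<lambda>s. cyc R (carrier R) \<one> s) ` (\<Union>T) \<union> (\<lambda>t. cyc R (carrier R) t \<one>) ` M"
  have UT: "\<Union>T \<subseteq> carrier R" using T rho_sub by blast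
  show "?B \<subseteq> proj_line R" using UT M_sub pt_1s pt_t1 by blast
  fix C assume "C \<in> chains R K"
  then obtain g where g: "g \<in> GL2 R (carrier R)" "C = point_act R g ` proj_line_sub R K"
    unfolding chains_def by auto
  obtain g1 g2 g3 g4 where gg: "g = (g1,g2,g3,g4)" by (cases g) auto
  have G: "(g1,g2,g3,g4) \<in> GL2 R (carrier R)" using g gg by simp
  note gc = GL2_carrier[OF G]
  have inC: "cyc R (carrier R) (g1 \<oplus> b \<otimes> g3) (g2 \<oplus> b \<otimes> g4) \<in> C" if b: "b \<in> K" for b
    using point_act_cyc[OF gc Kc[OF b]] pt_sub[OF b] g(2) gg by (metis image_eqI)
  show "C \<inter> ?B \<noteq> {}"
  proof (cases "\<exists>b\<in>K. g1 \<oplus> b \<otimes> g3 \<notin> Units R")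
    case True
    then obtain b where b: "b \<in> K" "g1 \<oplus> b \<otimes> g3 \<notin> Units R" by blast
    have bc: "b \<in> carrier R" using Kc b(1) .
    define a where "a = g1 \<oplus> b \<otimes> g3"
    define c where "c = g2 \<oplus> b \<otimes> g4"
    have ac: "a \<in> carrier R" "c \<in> carrier R" unfolding a_def c_def using gc bc by auto
    have cu: "c \<in> Units R" unfolding c_def using w2_unit[OF G bc b(2)] .
    have aM: "a \<in> M" using ac b(2) unfolding a_def nonunits_def by auto
    define t where "t = inv c \<otimes> a"
    have tM: "t \<in> M" unfolding t_def using M_lmult aM cu by auto
    have tc: "t \<in> carrier R" using tM M_sub by auto
    have "c \<otimes> t = a" unfolding t_def using cu ac by (simp add: m_assoc[symmetric])
    moreover have "c \<otimes> \<one> = c" using ac by simp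
    ultimately have "cyc R (carrier R) a c = cyc R (carrier R) t \<one>"
      using cyc_unit[OF cu tc one_closed] by simp
    then have "cyc R (carrier R) t \<one> \<in> C" using inC[OF b(1)] unfolding a_def c_def by simp
    moreover have "cyc R (carrier R) t \<one> \<in> ?B" using tM by blast
    ultimately show ?thesis by blast
  next
    case False
    then have gd: "good R K g" unfolding good_def w1_def gg using G by auto
    then obtain X where X: "X \<in> Gset R K g" "X \<in> T" using hit by blast
    then obtain b where b: "b \<in> K" "X = rho R (sval R g b)" unfolding Gset_def by auto
    have bc: "b \<in> carrier R" using Kc b(1) .
    define a where "a = g1 \<oplus> b \<otimes> g3"
    define c where "c = g2 \<oplus> b \<otimes> g4"
    have ac: "a \<in> carrier R" "c \<in> carrier R" unfolding a_def c_def using gc bc by auto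
    have au: "a \<in> Units R" using False b(1) unfolding a_def by auto
    have sv: "sval R g b = inv a \<otimes> c" unfolding sval_def w1_def w2_def gg a_def c_def by simp
    define s where "s = inv a \<otimes> c"
    have sc: "s \<in> carrier R" unfolding s_def using au ac by auto
    have "s \<in> X" using rho_mem[OF sc] b(2) sv unfolding s_def by simp
    then have "s \<in> \<Union>T" using X(2) by (rule UnionI[rotated])
    then have inB: "cyc R (carrier R) \<one> s \<in> ?B" by blast
    have "a \<otimes> s = c" unfolding s_def using au ac by (simp add: m_assoc[symmetric])
    moreover have "a \<otimes> \<one> = a" using ac by simp
    ultimately have "cyc R (carrier R) a c = cyc R (carrier R) \<one> s"
      using cyc_unit[OF au one_closed sc] by simp
    then have "cyc R (carrier R) \<one> s \<in> C" using inC[OF b(1)] unfolding a_def c_def by simp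
    then show ?thesis using inB by blast
  qed
qed

end



context chain_setting begin

lemma main_bound:
  assumes q: "card K = q" "q \<ge> 2" and dd: "dimension d K (carrier R)" and dm: "dimension \<delta> K M"
    and de: "d = 2 + \<delta>"
  shows "\<exists>B. blocking_set R K B \<and> real (card B) \<le> 10 * real q ^ (d - 1) * ln (real q)"
proof -
  let ?Y = "rho R ` carrier R"
  let ?F = "Gset R K ` {g. good R K g}"
  have cR: "card (carrier R) = q ^ d" using dimension_card[OF dd K] q(1) by simp
  have cM: "card M = q ^ \<delta>" using dimension_card[OF dm K] q(1) by simp
  have qd: "q ^ \<delta> > 0" using q(2) by simp
  have "card ?Y * q ^ \<delta> = q ^ 2 * q ^ \<delta>" using card_partition_rho cR cM de by (simp add: power_add power2_eq_square) (metis mult.commute)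
  then have cY: "card ?Y = q ^ 2" using qd q(2) by auto
  have finY: "finite ?Y" using fin by simp
  have FY: "?F \<subseteq> Pow ?Y" using Gset_sub by blast
  have Fk: "\<forall>C\<in>?F. q \<le> card C" using card_Gset q(1) by auto
  have cF: "card ?F \<le> q ^ 8" using card_Gsets cY by (simp add: power_mult[symmetric])
  have L: "ln (real q) > 0" using q(2) by simp
  obtain T where T: "T \<subseteq> ?Y" "\<forall>C\<in>?F. C \<inter> T \<noteq> {}" "real (card T) \<le> 8 * real q * ln (real q) + 1"
  proof (cases "?F = {}")
    case True then show ?thesis using that[of "{}"] L q(2) by simp
  next
    case False
    obtain T where T: "T \<subseteq> ?Y" "\<forall>C\<in>?F. C \<inter> T \<noteq> {}"
      "real (card T) \<le> real (card ?Y) / real q * ln (real (card ?F)) + 1"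
      using transversal[OF finY FY _ Fk False] q(2) by auto
    have finF: "finite ?F" using FY finY by (meson finite_Pow_iff finite_subset)
    have Fpos: "card ?F > 0" using False finF by (simp add: card_gt_0_iff)
    have "ln (real (card ?F)) \<le> ln (real q ^ 8)"
      using Fpos cF q(2) by (subst ln_le_cancel_iff) (auto simp: of_nat_power[symmetric] simp del: of_nat_power)
    also have "\<dots> = 8 * ln (real q)" using q(2) by (simp add: ln_realpow)
    finally have lnF: "ln (real (card ?F)) \<le> 8 * ln (real q)" .
    have "real (card ?Y) / real q = real q" using cY q(2) by (simp add: power2_eq_square)
    then have "real (card T) \<le> real q * ln (real (card ?F)) + 1" using T(3) by simp
    also have "\<dots> \<le> real q * (8 * ln (real q)) + 1" using lnF q(2) by (intro add_right_mono mult_left_mono) auto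
    finally show ?thesis using that T(1,2) by (simp add: algebra_simps)
  qed
  define B where "B = (\<lambda>s. cyc R (carrier R) \<one> s) ` (\<Union>T) \<union> (\<lambda>t. cyc R (carrier R) t \<one>) ` M"
  have hit: "\<And>g. good R K g \<Longrightarrow> Gset R K g \<inter> T \<noteq> {}" using T(2) by blast
  have bl: "blocking_set R K B" unfolding B_def by (rule blocking[OF T(1) hit])
  have finT: "finite T" using T(1) finY finite_subset by blast
  have "card (\<Union>T) \<le> sum card T" by (rule card_Union_le_sum_card)
  also have "\<dots> = card T * q ^ \<delta>"
  proof -
    have "\<forall>X\<in>T. card X = q ^ \<delta>" using T(1) card_rho cM by auto
    then show ?thesis by simp
  qed
  finally have cU: "card (\<Union>T) \<le> card T * q ^ \<delta>" .
  have UTc: "\<Union>T \<subseteq> carrier R" using T(1) rho_sub by blast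
  have finU: "finite (\<Union>T)" using UTc fin finite_subset by blast
  have finM: "finite M" using M_sub fin finite_subset by blast
  have "card B \<le> card ((\<lambda>s. cyc R (carrier R) \<one> s) ` (\<Union>T)) + card ((\<lambda>t. cyc R (carrier R) t \<one>) ` M)"
    unfolding B_def by (rule card_Un_le)
  also have "\<dots> \<le> card (\<Union>T) + card M" by (intro add_mono card_image_le) (use finU finM in auto)
  finally have "card B \<le> card T * q ^ \<delta> + q ^ \<delta>" using cU cM by linarith
  then have "real (card B) \<le> (real (card T) + 1) * real q ^ \<delta>"
    by (metis (mono_tags, lifting) distrib_right mult_1 of_nat_add of_nat_le_iff of_nat_mult of_nat_power of_nat_1)
  also have "\<dots> \<le> (8 * real q * ln (real q) + 2) * real q ^ \<delta>"
    using T(3) by (intro mult_right_mono) auto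
  also have "\<dots> \<le> 10 * real q ^ (d - 1) * ln (real q)"
  proof -
    have h: "ln (real q) \<ge> 1 - 1 / real q"
    proof -
      have "ln (1 / real q) \<le> 1 / real q - 1" using q(2) by (intro ln_le_minus_one) simp
      then show ?thesis using q(2) by (simp add: ln_div)
    qed
    have "real q * ln (real q) \<ge> real q - 1" using h q(2) by (simp add: field_simps)
    then have qL: "real q * ln (real q) \<ge> 1" using q(2) by linarith
    have "8 * real q * ln (real q) + 2 \<le> 10 * (real q * ln (real q))" using qL by linarith
    then have "(8 * real q * ln (real q) + 2) * real q ^ \<delta> \<le> 10 * (real q * ln (real q)) * real q ^ \<delta>"
      by (intro mult_right_mono) auto
    also have "\<dots> = 10 * real q ^ (d - 1) * ln (real q)" using de by (simp add: algebra_simps)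
    finally show ?thesis .
  qed
  finally show ?thesis using bl by blast
qed

end

theorem mainTheorem6:
  shows "\<exists>c::real. c > 0 \<and>
    (\<forall>(R :: nat ring) (K :: nat set) (q :: nat) (d :: nat) (\<delta> :: nat).
       (\<exists>p n. prime p \<and> n > 0 \<and> q = p ^ n) \<and> q \<ge> 2 \<and>
       local_ring R \<and> finite (carrier R) \<and>
       subfield K R \<and> card K = q \<and>
       ring.dimension R d K (carrier R) \<and>
       ring.dimension R \<delta> K (carrier R - Units R) \<and>
       d = 2 + \<delta>
       \<longrightarrow> (\<exists>B. blocking_set R K B \<and>
              real (card B) \<le> c * real q ^ (d - 1) * ln (real q)))"
proof (intro exI[of _ 10] conjI allI impI)
  fix R :: "nat ring" and K :: "nat set" and q d \<delta> :: nat
  assume H: "(\<exists>p n. prime p \<and> n > 0 \<and> q = p ^ n) \<and> q \<ge> 2 \<and>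
       local_ring R \<and> finite (carrier R) \<and>
       subfield K R \<and> card K = q \<and>
       ring.dimension R d K (carrier R) \<and>
       ring.dimension R \<delta> K (carrier R - Units R) \<and>
       d = 2 + \<delta>"
  have "chain_setting R K"
    using H unfolding local_ring_def chain_setting_def chain_setting_axioms_def nonunits_def by auto
  then show "\<exists>B. blocking_set R K B \<and> real (card B) \<le> 10 * real q ^ (d - 1) * ln (real q)"
    using chain_setting.main_bound[of R K q d \<delta>] H unfolding nonunits_def by auto
qed simp


end
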